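(* Fix $a>1$ and define, for $(x,y)\in\mathbb R^2$ with $x+y\neq 0$, $$T(x,y)=\big(f(x,y),g(x,y)\big),\qquad f(x,y)=\frac{a^x(a^{2y}-1)}{(a^x+a^y)(a^{x+y}-1)},\quad g(x,y)=\frac{2a^{x+y}}{(a^x+a^y)(a^{x+y}-1)}.$$ Then: (a) for every $c$, the image under $T$ of the part of the vertical line $x=c$ lying in the half-plane $x+y>0$ is contained in a line through the point $P=(1,0)$ of the $uv$-plane; (b) for every $c$, the image under $T$ of the part of the horizontal line $y=c$ lying in the half-plane $x+y>0$ is contained in a line through the origin $O=(0,0)$ of the $uv$-plane; (c) for every axes-parallel square with vertices $A=(x,y)$, $B=(x+l,y)$, $C=(x+l,y+l)$, $D=(x,y+l)$, where $l>0$ and $x+y>0$ (so the square lies in the half-plane $x+y>0$), the points $A'=T(A),B'=T(B),C'=T(C),D'=T(D)$ are the vertices, in this order, of a tangential quadrilateral; in particular $|A'B'|+|C'D'|=|B'C'|+|D'A'|$.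
   Context: A quadrilateral is tangential if it admits an inscribed circle tangent to all four sides; equivalently (Pitot–Steiner), the sums of the lengths of the two pairs of opposite sides are equal. *)

theory Defs
  imports "HOL-Analysis.Analysis"
begin

text \<open>Points of the uv-plane are represented as complex numbers u + i v.\<close>

definition Tf :: "real \<Rightarrow> real \<Rightarrow> real \<Rightarrow> real" where
  "Tf a x y = a powr x * (a powr (2 * y) - 1) / ((a powr x + a powr y) * (a powr (x + y) - 1))"

definition Tg :: "real \<Rightarrow> real \<Rightarrow> real \<Rightarrow> real" where
  "Tg a x y = 2 * a powr (x + y) / ((a powr x + a powr y) * (a powr (x + y) - 1))"

definition T :: "real \<Rightarrow> real \<Rightarrow> real \<Rightarrow> complex" where
  "T a x y = Complex (Tf a x y) (Tg a x y)"

definition line_through :: "complex \<Rightarrow> complex \<Rightarrow> complex set" where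
  "line_through p d = {p + of_real t * d | t. True}"

definition cross2 :: "complex \<Rightarrow> complex \<Rightarrow> real" where
  "cross2 u v = Re u * Im v - Im u * Re v"

definition convex_quadrilateral :: "complex \<Rightarrow> complex \<Rightarrow> complex \<Rightarrow> complex \<Rightarrow> bool" where
  "convex_quadrilateral A B C D \<longleftrightarrow>
     (cross2 (B - A) (C - B) > 0 \<and> cross2 (C - B) (D - C) > 0 \<and>
      cross2 (D - C) (A - D) > 0 \<and> cross2 (A - D) (B - A) > 0) \<or>
     (cross2 (B - A) (C - B) < 0 \<and> cross2 (C - B) (D - C) < 0 \<and>
      cross2 (D - C) (A - D) < 0 \<and> cross2 (A - D) (B - A) < 0)"

definition tangential_quadrilateral :: "complex \<Rightarrow> complex \<Rightarrow> complex \<Rightarrow> complex \<Rightarrow> bool" where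
  "tangential_quadrilateral A B C D \<longleftrightarrow>
     convex_quadrilateral A B C D \<and>
     (\<exists>z r. r > 0 \<and> z \<in> interior (convex hull {A, B, C, D}) \<and>
        infdist z (closed_segment A B) = r \<and> infdist z (closed_segment B C) = r \<and>
        infdist z (closed_segment C D) = r \<and> infdist z (closed_segment D A) = r)"

end

theory Submission imports Defs begin

definition V :: "real \<Rightarrow> real \<Rightarrow> complex" where
  "V s t = Complex (t/(s+t)) (1/(s+t))"

lemma V_diff_s:
  assumes "s+t \<noteq> 0" "s'+t \<noteq> 0"
  shows "V s' t - V s t = Complex (t * ((s-s')/((s+t)*(s'+t)))) ((s-s')/((s+t)*(s'+t)))"
  using assms unfolding V_def by (simp add: complex_eq_iff field_simps)

lemma V_diff_t:
  assumes "s+t \<noteq> 0" "s+t' \<noteq> 0"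
  shows "V s t' - V s t = Complex (s * ((t'-t)/((s+t)*(s+t')))) (- ((t'-t)/((s+t)*(s+t'))))"
proof -
  have "- ((t'-t)/((s+t)*(s+t'))) = (t - t')/((s+t)*(s+t'))" by (metis minus_diff_eq minus_divide_left)
  then show ?thesis using assms unfolding V_def by (simp add: complex_eq_iff field_simps)
qed

lemma cross2_Complex: "cross2 (Complex a b) (Complex c d) = a*d - b*c"
  by (simp add: cross2_def)

lemma norm_Complex_scaled:
  assumes "c > 0" "c^2 = 1 + t^2"
  shows "norm (Complex (t*k) k) = \<bar>k\<bar> * c"
proof -
  have "(t*k)^2 + k^2 = (\<bar>k\<bar> * c)^2" using assms(2) by (simp add: power_mult_distrib algebra_simps)
  then show ?thesis using assms(1) by (simp add: complex_norm)
qed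

lemma norm_Complex_scaled2:
  assumes "c > 0" "c^2 = 1 + t^2"
  shows "norm (Complex (t*k) (-k)) = \<bar>k\<bar> * c"
proof -
  have "(t*k)^2 + (-k)^2 = (\<bar>k\<bar> * c)^2" using assms(2) by (simp add: power_mult_distrib algebra_simps)
  then show ?thesis using assms(1) by (simp add: complex_norm)
qed

lemma abs_lt_of_sq:
  fixes x c :: real
  assumes "c > 0" "c^2 = 1 + x^2"
  shows "\<bar>x\<bar> < c"
proof -
  have "\<bar>x\<bar>^2 < c^2" using assms by simp
  then show ?thesis using assms(1) power_less_imp_less_base by fastforce
qed

lemma pitot_alg:
  fixes a b c d x y p q mm nn :: real
  assumes "a>0" "b>0" "c>0" "d>0" "x*(p*c*d + q*a*b) = y*(mm*a*c + nn*b*d)"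
  shows "x/(a*b)*p + x/(d*c)*q = y/(b*d)*mm + y/(c*a)*nn"
proof -
  have "x/(a*b)*p + x/(d*c)*q = x*(p*c*d + q*a*b)/(a*b*c*d)" using assms by (simp add: field_simps)
  also have "\<dots> = y*(mm*a*c + nn*b*d)/(a*b*c*d)" using assms(5) by simp
  also have "\<dots> = y/(b*d)*mm + y/(c*a)*nn" using assms by (simp add: field_simps)
  finally show ?thesis .
qed


lemma infdist_seg:
  fixes P Q w z n :: complex
  assumes "norm n = 1" "inner P n = c" "inner Q n = c" "w \<in> closed_segment P Q" "z = w + \<rho> *\<^sub>R n"
  shows "infdist z (closed_segment P Q) = \<bar>\<rho>\<bar>"
proof -
  have lin: "inner v n = c" if "v \<in> closed_segment P Q" for v
  proof -
    from that obtain u where "v = (1-u) *\<^sub>R P + u *\<^sub>R Q" by (auto simp: in_segment)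
    then have "inner v n = (1-u) * inner P n + u * inner Q n" by (simp add: inner_add_left)
    then show ?thesis using assms(2,3) by (simp add: algebra_simps)
  qed
  have nn: "inner n n = 1" using assms(1) by (metis power2_norm_eq_inner power_one)
  have ge: "\<bar>\<rho>\<bar> \<le> dist z v" if "v \<in> closed_segment P Q" for v
  proof -
    have "inner (z - v) n = \<rho>" using lin[OF that] lin[OF assms(4)] nn assms(5)
      by (simp add: inner_diff_left inner_add_left)
    moreover have "\<bar>inner (z - v) n\<bar> \<le> norm (z - v) * norm n" by (rule Cauchy_Schwarz_ineq2)
    ultimately show ?thesis using assms(1) by (simp add: dist_norm)
  qed
  have eq: "dist z w = \<bar>\<rho>\<bar>" using assms(1,5) by (simp add: dist_norm)
  have "infdist z (closed_segment P Q) = Inf ((dist z) ` closed_segment P Q)"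
    by (simp add: infdist_notempty)
  also have "\<dots> = \<bar>\<rho>\<bar>"
  proof (rule cInf_eq_minimum)
    show "\<bar>\<rho>\<bar> \<in> dist z ` closed_segment P Q" by (metis eq assms(4) image_eqI)
  qed (use ge in auto)
  finally show ?thesis .
qed

lemma seg_affine:
  fixes x a b :: real and c K :: complex
  assumes "x \<in> closed_segment a b"
  shows "c + x *\<^sub>R K \<in> closed_segment (c + a *\<^sub>R K) (c + b *\<^sub>R K)"
proof -
  from assms obtain u where u: "0 \<le> u" "u \<le> 1" "x = (1-u)*a + u*b" by (auto simp: in_segment)
  show ?thesis unfolding in_segment
    by (rule exI[of _ u]) (simp add: u algebra_simps scaleR_add_left scaleR_diff_left)
qed

lemma inv_seg:
  fixes a x b :: real
  assumes "0 < a" "a \<le> x" "x \<le> b"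
  shows "1/x \<in> closed_segment (1/a) (1/b)"
proof -
  have "1/b \<le> 1/x" "1/x \<le> 1/a" using assms by (simp_all add: frac_le)
  then show ?thesis by (auto simp: closed_segment_eq_real_ivl)
qed

lemma V_scale: "V s t = 0 + (1/(s+t)) *\<^sub>R Complex t 1"
  by (simp add: V_def complex_eq_iff)

lemma V_scale': "s + t \<noteq> 0 \<Longrightarrow> V s t = 1 + (1/(s+t)) *\<^sub>R Complex (-s) 1"
  by (simp add: V_def complex_eq_iff field_simps)

lemma V_seg_s:
  assumes "0 < sa + t" "sa \<le> s" "s \<le> sb"
  shows "V s t \<in> closed_segment (V sa t) (V sb t)"
  unfolding V_scale[of s] V_scale[of sa] V_scale[of sb]
  by (rule seg_affine, rule inv_seg) (use assms in auto)

lemma V_seg_t: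
  assumes "0 < s + ta" "ta \<le> t" "t \<le> tb"
  shows "V s t \<in> closed_segment (V s ta) (V s tb)"
proof -
  have nz: "s + t \<noteq> 0" "s + tb \<noteq> 0" "s + ta \<noteq> 0" using assms by auto
  show ?thesis
    unfolding V_scale'[OF nz(1)] V_scale'[OF nz(2)] V_scale'[OF nz(3)]
    by (rule seg_affine, rule inv_seg) (use assms in auto)
qed

lemma side_M:
  fixes t c Ct W X Y \<rho> :: real
  assumes "c>0" "Ct>0" "W>0" "X*c = t*Ct + \<rho>" "Y*c = Ct - \<rho>*t"
  shows "Complex (X/W) (Y/W) = V (c*W/Ct - t) t + (\<rho>/W) *\<^sub>R Complex (1/c) (-t/c)"
proof -
  have e: "c*W/Ct - t + t = c*W/Ct" by simp
  have "X/W = t/(c*W/Ct) + \<rho>/W/c" using assms by (simp add: field_simps)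
  moreover have "Y/W = 1/(c*W/Ct) + \<rho>/W*(-t/c)" using assms by (simp add: field_simps)
  ultimately show ?thesis unfolding V_def e by (simp add: complex_eq_iff)
qed

lemma side_L:
  fixes s c Cs W X Y \<rho> :: real
  assumes "c>0" "Cs>0" "W>0" "X*c = c*W - s*Cs + \<rho>" "Y*c = Cs + \<rho> * s"
  shows "Complex (X/W) (Y/W) = V s (c*W/Cs - s) + (\<rho>/W) *\<^sub>R Complex (1/c) (s/c)"
proof -
  have e: "s + (c*W/Cs - s) = c*W/Cs" by simp
  have "(c*W/Cs - s)/(c*W/Cs) + \<rho>/W/c = (c*W - s*Cs + \<rho>)/(c*W)" using assms(1-3)
    by (simp add: field_simps)
  also have "\<dots> = X*c/(c*W)" using assms(4) by simp
  also have "\<dots> = X/W" using assms(1) by simp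
  finally have "X/W = (c*W/Cs - s)/(c*W/Cs) + \<rho>/W/c" by simp
  moreover have "Y/W = 1/(c*W/Cs) + \<rho>/W * (s/c)" using assms by (simp add: field_simps)
  ultimately show ?thesis unfolding V_def e by (simp add: complex_eq_iff)
qed

lemma norm_unit:
  assumes "c>0" "c^2 = 1 + t^2"
  shows "norm (Complex (1/c) (-t/c)) = 1" "norm (Complex (1/c) (t/c)) = 1"
proof -
  have "(1/c)^2 + (t/c)^2 = (1+t^2)/c^2" by (simp add: power_divide add_divide_distrib)
  also have "\<dots> = 1" using assms(1) by (simp add: assms(2)[symmetric])
  finally have "(1/c)^2 + (t/c)^2 = 1" .
  then show "norm (Complex (1/c) (-t/c)) = 1" "norm (Complex (1/c) (t/c)) = 1"
    by (simp_all add: complex_norm power_divide)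
qed

lemma inner_M: "inner (V s t) (Complex (1/c) (-t/c)) = 0"
  by (simp add: V_def inner_complex_def)

lemma inner_L: "s + t \<noteq> 0 \<Longrightarrow> c \<noteq> 0 \<Longrightarrow> inner (V s t) (Complex (1/c) (s/c)) = 1/c"
proof -
  assume a: "s + t \<noteq> 0" "c \<noteq> 0"
  have "inner (V s t) (Complex (1/c) (s/c)) = (t + s)/((s+t)*c)"
    by (simp add: V_def inner_complex_def add_divide_distrib)
  also have "\<dots> = 1/c" using a by (simp add: add.commute)
  finally show ?thesis .
qed

locale sqr =
  fixes S Cs U Ct dS dC :: real
  assumes hs: "Cs^2 = 1 + S^2" and ht: "Ct^2 = 1 + U^2" and hd: "dC^2 = 1 + dS^2"
    and Cs_pos: "Cs > 0" and Ct_pos: "Ct > 0" and dC_pos: "dC > 0" and dS_pos: "dS > 0"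
    and pos: "(S*dC - Cs*dS) + (U*dC - Ct*dS) > 0"
begin

definition "s1 = S*dC - Cs*dS"
definition "s2 = S*dC + Cs*dS"
definition "t1 = U*dC - Ct*dS"
definition "t2 = U*dC + Ct*dS"
definition "cs1 = Cs*dC - S*dS"
definition "cs2 = Cs*dC + S*dS"
definition "ct1 = Ct*dC - U*dS"
definition "ct2 = Ct*dC + U*dS"

lemmas defs = s1_def s2_def t1_def t2_def cs1_def cs2_def ct1_def ct2_def

lemma S_lt: "\<bar>S\<bar> < Cs" using abs_lt_of_sq[OF Cs_pos hs] .
lemma U_lt: "\<bar>U\<bar> < Ct" using abs_lt_of_sq[OF Ct_pos ht] .
lemma dS_lt: "dS < dC" using abs_lt_of_sq[OF dC_pos hd] by simp

lemma big_lt: assumes "\<bar>X\<bar> < C" shows "X * dS < C * dC" "- (X * dS) < C * dC"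
proof -
  have "\<bar>X\<bar> * dS < C * dS" using assms dS_pos by (simp add: mult_strict_right_mono)
  moreover have "C * dS < C * dC" using dS_lt assms by (simp add: mult_strict_left_mono)
  moreover have "X * dS \<le> \<bar>X\<bar> * dS" using dS_pos by (simp add: mult_right_mono)
  moreover have "- (X * dS) \<le> \<bar>X\<bar> * dS" using mult_right_mono[of "-X" "\<bar>X\<bar>" dS] dS_pos by simp
  ultimately show "X * dS < C * dC" "- (X * dS) < C * dC" by linarith+
qed

lemma cs1_pos: "cs1 > 0" using big_lt[OF S_lt] by (simp add: cs1_def)
lemma cs2_pos: "cs2 > 0" using big_lt[OF S_lt] by (simp add: cs2_def)
lemma ct1_pos: "ct1 > 0" using big_lt[OF U_lt] by (simp add: ct1_def)
lemma ct2_pos: "ct2 > 0" using big_lt[OF U_lt] by (simp add: ct2_def)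

lemma cs1_sq: "cs1^2 = 1 + s1^2" unfolding defs using hs hd by algebra
lemma cs2_sq: "cs2^2 = 1 + s2^2" unfolding defs using hs hd by algebra
lemma ct1_sq: "ct1^2 = 1 + t1^2" unfolding defs using ht hd by algebra
lemma ct2_sq: "ct2^2 = 1 + t2^2" unfolding defs using ht hd by algebra

lemma s12: "s1 < s2" using Cs_pos dS_pos by (simp add: defs)
lemma t12: "t1 < t2" using Ct_pos dS_pos by (simp add: defs)
lemma P11: "s1 + t1 > 0" using pos by (simp add: defs)
lemma P21: "s2 + t1 > 0" using P11 s12 by linarith
lemma P12: "s1 + t2 > 0" using P11 t12 by linarith
lemma P22: "s2 + t2 > 0" using P11 s12 t12 by linarith
lemma SU: "S + U > 0"
proof -
  have "(s1+t1) + (s2+t2) = 2*dC*(S+U)" by (simp add: defs algebra_simps)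
  then have "0 < dC*(S+U)" using P11 P22 by linarith
  then show ?thesis using dC_pos by (simp add: zero_less_mult_iff)
qed

lemma K: "Ct*Cs > 1 - U*S" "Ct*Cs > U*S - 1"
proof -
  have "(Ct*Cs)^2 - (1 - U*S)^2 = (U+S)^2" using hs ht by algebra
  moreover have "(U+S)^2 > 0" using SU by (simp add: add.commute)
  ultimately have "(1 - U*S)^2 < (Ct*Cs)^2" by linarith
  then have "\<bar>1 - U*S\<bar>^2 < (Ct*Cs)^2" by simp
  then have "\<bar>1 - U*S\<bar> < Ct*Cs" using Ct_pos Cs_pos power_less_imp_less_base by fastforce
  then show "Ct*Cs > 1 - U*S" "Ct*Cs > U*S - 1" by linarith+
qed


definition "A = V s1 t1"
definition "B = V s2 t1"
definition "C = V s2 t2"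
definition "D = V s1 t2"

definition "k1 = (s1-s2)/((s1+t1)*(s2+t1))"
definition "k2 = (t2-t1)/((s2+t1)*(s2+t2))"
definition "k3 = (s2-s1)/((s2+t2)*(s1+t2))"
definition "k4 = (t1-t2)/((s1+t2)*(s1+t1))"

lemma k1_neg: "k1 < 0" using s12 P11 P21 by (simp add: k1_def divide_neg_pos)
lemma k2_pos: "k2 > 0" using t12 P21 P22 by (simp add: k2_def)
lemma k3_pos: "k3 > 0" using s12 P12 P22 by (simp add: k3_def)
lemma k4_neg: "k4 < 0" using t12 P11 P12 by (simp add: k4_def divide_neg_pos)

lemma BA: "B - A = Complex (t1*k1) k1"
  unfolding A_def B_def k1_def using V_diff_s[of s1 t1 s2] P11 P21 by simp
lemma CB: "C - B = Complex (s2*k2) (-k2)"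
  unfolding C_def B_def k2_def using V_diff_t[of s2 t1 t2] P21 P22 by simp
lemma DC: "D - C = Complex (t2*k3) k3"
  unfolding C_def D_def k3_def using V_diff_s[of s2 t2 s1] P12 P22 by simp
lemma AD: "A - D = Complex (s1*k4) (-k4)"
  unfolding A_def D_def k4_def using V_diff_t[of s1 t2 t1] P11 P12 by simp

lemma convex: "convex_quadrilateral A B C D"
proof -
  have "cross2 (B - A) (C - B) = (-k1)*k2*(s2+t1)" unfolding BA CB cross2_Complex by (simp add: algebra_simps)
  also have "\<dots> > 0" using k1_neg k2_pos P21 by (intro mult_pos_pos) auto
  finally have 1: "cross2 (B - A) (C - B) > 0" .
  have "cross2 (C - B) (D - C) = k2*k3*(s2+t2)" unfolding DC CB cross2_Complex by (simp add: algebra_simps)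
  also have "\<dots> > 0" using k3_pos k2_pos P22 by simp
  finally have 2: "cross2 (C - B) (D - C) > 0" .
  have "cross2 (D - C) (A - D) = k3*(-k4)*(s1+t2)" unfolding DC AD cross2_Complex by (simp add: algebra_simps)
  also have "\<dots> > 0" using k3_pos k4_neg P12 by (intro mult_pos_pos) auto
  finally have 3: "cross2 (D - C) (A - D) > 0" .
  have "cross2 (A - D) (B - A) = (-k4)*(-k1)*(s1+t1)" unfolding BA AD cross2_Complex by (simp add: algebra_simps)
  also have "\<dots> > 0" using k1_neg k4_neg P11 by (intro mult_pos_pos) auto
  finally have 4: "cross2 (A - D) (B - A) > 0" .
  show ?thesis unfolding convex_quadrilateral_def using 1 2 3 4 by simp
qed

lemma dAB: "dist A B = (-k1) * ct1"
  using norm_Complex_scaled[OF ct1_pos ct1_sq, of k1] k1_neg by (simp add: dist_norm norm_minus_commute[of A] norm_minus_commute[of B] norm_minus_commute[of C] norm_minus_commute[of D] BA)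
lemma dBC: "dist B C = k2 * cs2"
  using norm_Complex_scaled2[OF cs2_pos cs2_sq, of k2] k2_pos by (simp add: dist_norm norm_minus_commute[of A] norm_minus_commute[of B] norm_minus_commute[of C] norm_minus_commute[of D] CB)
lemma dCD: "dist C D = k3 * ct2"
  using norm_Complex_scaled[OF ct2_pos ct2_sq, of k3] k3_pos by (simp add: dist_norm norm_minus_commute[of A] norm_minus_commute[of B] norm_minus_commute[of C] norm_minus_commute[of D] DC)
lemma dDA: "dist D A = (-k4) * cs1"
  using norm_Complex_scaled2[OF cs1_pos cs1_sq, of k4] k4_neg by (simp add: dist_norm norm_minus_commute[of A] norm_minus_commute[of B] norm_minus_commute[of C] norm_minus_commute[of D] AD)

lemma pitot: "dist A B + dist C D = dist B C + dist D A"
proof -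
  have e: "(s2-s1)*(ct1*(s1+t2)*(s2+t2) + ct2*(s1+t1)*(s2+t1)) = (t2-t1)*(cs2*(s1+t1)*(s1+t2) + cs1*(s2+t1)*(s2+t2))"
    unfolding defs using hs ht hd by algebra
  have m1: "-k1 = (s2-s1)/((s1+t1)*(s2+t1))" unfolding k1_def by (metis minus_diff_eq minus_divide_left)
  have m4: "-k4 = (t2-t1)/((s1+t2)*(s1+t1))" unfolding k4_def by (metis minus_diff_eq minus_divide_left)
  show ?thesis unfolding dAB dBC dCD dDA m1 m4 k2_def k3_def
    using pitot_alg[OF P11 P21 P12 P22 e] by simp
qed

definition "W = S + U"
definition "z = Complex (U/W) (dC/W)"
definition "r = dS/W"
definition "n1 = Complex (1/ct1) (-t1/ct1)"
definition "n3 = Complex (1/ct2) (-t2/ct2)"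
definition "m2 = Complex (1/cs2) (s2/cs2)"
definition "m1 = Complex (1/cs1) (s1/cs1)"

lemma W_pos: "W > 0" using SU by (simp add: W_def)
lemma r_pos: "r > 0" using W_pos dS_pos by (simp add: r_def)

lemma K1: "Ct*Cs + U*S - 1 > 0" using K by linarith
lemma K2: "1 - U*S + Ct*Cs > 0" using K by linarith

lemma side_AB: "infdist z (closed_segment A B) = r"
proof -
  define sw where "sw = ct1*W/Ct - t1"
  have e1: "U*ct1 = t1*Ct + dS" unfolding defs using ht by algebra
  have e2: "dC*ct1 = Ct - dS*t1" unfolding defs using hd by algebra
  have zz: "z = V sw t1 + (dS/W) *\<^sub>R n1"
    unfolding z_def n1_def sw_def by (rule side_M[OF ct1_pos Ct_pos W_pos e1 e2])
  have i1: "ct1*W - Ct*(s1+t1) = dS*(1 - U*S + Ct*Cs)" unfolding defs W_def using ht by algebra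
  have i2: "Ct*(s2+t1) - ct1*W = dS*(Ct*Cs + U*S - 1)" unfolding defs W_def using ht by algebra
  have "sw - s1 = (ct1*W - Ct*(s1+t1))/Ct" unfolding sw_def using Ct_pos by (simp add: field_simps)
  also have "\<dots> \<ge> 0" unfolding i1 using dS_pos K2 Ct_pos by simp
  finally have b1: "s1 \<le> sw" by simp
  have "s2 - sw = (Ct*(s2+t1) - ct1*W)/Ct" unfolding sw_def using Ct_pos by (simp add: field_simps)
  also have "\<dots> \<ge> 0" unfolding i2 using dS_pos K1 Ct_pos by simp
  finally have b2: "sw \<le> s2" by simp
  have w: "V sw t1 \<in> closed_segment A B" unfolding A_def B_def by (rule V_seg_s[OF P11 b1 b2])
  have "infdist z (closed_segment A B) = \<bar>dS/W\<bar>"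
    apply (rule infdist_seg[OF _ _ _ w zz])
      apply (unfold n1_def A_def B_def, rule norm_unit(1)[OF ct1_pos ct1_sq])
     apply (rule inner_M)
    apply (rule inner_M)
    done
  then show ?thesis using dS_pos W_pos by (simp add: r_def)
qed

lemma side_CD: "infdist z (closed_segment C D) = r"
proof -
  define sw where "sw = ct2*W/Ct - t2"
  have e1: "U*ct2 = t2*Ct + (-dS)" unfolding defs using ht by algebra
  have e2: "dC*ct2 = Ct - (-dS)*t2" unfolding defs using hd by algebra
  have zz: "z = V sw t2 + (-dS/W) *\<^sub>R n3"
    unfolding z_def n3_def sw_def using side_M[OF ct2_pos Ct_pos W_pos e1 e2] by simp
  have i1: "ct2*W - Ct*(s1+t2) = dS*(Ct*Cs + U*S - 1)" unfolding defs W_def using ht by algebra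
  have i2: "Ct*(s2+t2) - ct2*W = dS*(1 - U*S + Ct*Cs)" unfolding defs W_def using ht by algebra
  have "sw - s1 = (ct2*W - Ct*(s1+t2))/Ct" unfolding sw_def using Ct_pos by (simp add: field_simps)
  also have "\<dots> \<ge> 0" unfolding i1 using dS_pos K1 Ct_pos by simp
  finally have b1: "s1 \<le> sw" by simp
  have "s2 - sw = (Ct*(s2+t2) - ct2*W)/Ct" unfolding sw_def using Ct_pos by (simp add: field_simps)
  also have "\<dots> \<ge> 0" unfolding i2 using dS_pos K2 Ct_pos by simp
  finally have b2: "sw \<le> s2" by simp
  have w: "V sw t2 \<in> closed_segment C D" unfolding C_def D_def
    using V_seg_s[OF P12 b1 b2] by (simp add: closed_segment_commute)
  have "infdist z (closed_segment C D) = \<bar>-dS/W\<bar>"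
    apply (rule infdist_seg[OF _ _ _ w zz])
      apply (unfold n3_def C_def D_def, rule norm_unit(1)[OF ct2_pos ct2_sq])
     apply (rule inner_M)
    apply (rule inner_M)
    done
  then show ?thesis using dS_pos W_pos by (simp add: r_def)
qed

lemma side_BC: "infdist z (closed_segment B C) = r"
proof -
  define tw where "tw = cs2*W/Cs - s2"
  have e1: "U*cs2 = cs2*W - s2*Cs + dS" unfolding defs W_def using hs by algebra
  have e2: "dC*cs2 = Cs + dS * s2" unfolding defs using hd by algebra
  have zz: "z = V s2 tw + (dS/W) *\<^sub>R m2"
    unfolding z_def m2_def tw_def by (rule side_L[OF cs2_pos Cs_pos W_pos e1 e2])
  have i1: "cs2*W - Cs*(s2+t1) = dS*(Ct*Cs + U*S - 1)" unfolding defs W_def using hs by algebra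
  have i2: "Cs*(s2+t2) - cs2*W = dS*(1 - U*S + Ct*Cs)" unfolding defs W_def using hs by algebra
  have "tw - t1 = (cs2*W - Cs*(s2+t1))/Cs" unfolding tw_def using Cs_pos by (simp add: field_simps)
  also have "\<dots> \<ge> 0" unfolding i1 using dS_pos K1 Cs_pos by simp
  finally have b1: "t1 \<le> tw" by simp
  have "t2 - tw = (Cs*(s2+t2) - cs2*W)/Cs" unfolding tw_def using Cs_pos by (simp add: field_simps)
  also have "\<dots> \<ge> 0" unfolding i2 using dS_pos K2 Cs_pos by simp
  finally have b2: "tw \<le> t2" by simp
  have w: "V s2 tw \<in> closed_segment B C" unfolding B_def C_def by (rule V_seg_t[OF P21 b1 b2])
  have "infdist z (closed_segment B C) = \<bar>dS/W\<bar>"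
    apply (rule infdist_seg[OF _ _ _ w zz])
      apply (unfold m2_def B_def C_def, rule norm_unit(2)[OF cs2_pos cs2_sq])
     apply (rule inner_L) using P21 P22 cs2_pos apply auto[2]
    apply (rule inner_L) using P21 P22 cs2_pos apply auto[2]
    done
  then show ?thesis using dS_pos W_pos by (simp add: r_def)
qed

lemma side_DA: "infdist z (closed_segment D A) = r"
proof -
  define tw where "tw = cs1*W/Cs - s1"
  have e1: "U*cs1 = cs1*W - s1*Cs + (-dS)" unfolding defs W_def using hs by algebra
  have e2: "dC*cs1 = Cs + (-dS) * s1" unfolding defs using hd by algebra
  have zz: "z = V s1 tw + (-dS/W) *\<^sub>R m1"
    unfolding z_def m1_def tw_def using side_L[OF cs1_pos Cs_pos W_pos e1 e2] by simp
  have i1: "cs1*W - Cs*(s1+t1) = dS*(1 - U*S + Ct*Cs)" unfolding defs W_def using hs by algebra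
  have i2: "Cs*(s1+t2) - cs1*W = dS*(Ct*Cs + U*S - 1)" unfolding defs W_def using hs by algebra
  have "tw - t1 = (cs1*W - Cs*(s1+t1))/Cs" unfolding tw_def using Cs_pos by (simp add: field_simps)
  also have "\<dots> \<ge> 0" unfolding i1 using dS_pos K2 Cs_pos by simp
  finally have b1: "t1 \<le> tw" by simp
  have "t2 - tw = (Cs*(s1+t2) - cs1*W)/Cs" unfolding tw_def using Cs_pos by (simp add: field_simps)
  also have "\<dots> \<ge> 0" unfolding i2 using dS_pos K1 Cs_pos by simp
  finally have b2: "tw \<le> t2" by simp
  have w: "V s1 tw \<in> closed_segment D A" unfolding D_def A_def
    using V_seg_t[OF P11 b1 b2] by (simp add: closed_segment_commute)
  have "infdist z (closed_segment D A) = \<bar>-dS/W\<bar>"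
    apply (rule infdist_seg[OF _ _ _ w zz])
      apply (unfold m1_def D_def A_def, rule norm_unit(2)[OF cs1_pos cs1_sq])
     apply (rule inner_L) using P11 P12 cs1_pos apply auto[2]
    apply (rule inner_L) using P11 P12 cs1_pos apply auto[2]
    done
  then show ?thesis using dS_pos W_pos by (simp add: r_def)
qed

lemma cross_nz: "cross2 (B - A) (C - B) \<noteq> 0" "cross2 (C - B) (D - C) \<noteq> 0"
   "cross2 (D - C) (A - D) \<noteq> 0"
  using convex unfolding convex_quadrilateral_def by auto

lemma cross2_neg_self: "cross2 u (- u) = 0" "cross2 u 0 = 0" "cross2 0 u = 0"
  by (simp_all add: cross2_def)

lemma distinct4: "A \<noteq> B" "A \<noteq> C" "A \<noteq> D" "B \<noteq> C" "B \<noteq> D" "C \<noteq> D"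
proof -
  show "A \<noteq> B" using cross_nz(1) by (auto simp: cross2_def)
  show "B \<noteq> C" using cross_nz(1) by (auto simp: cross2_def)
  show "C \<noteq> D" using cross_nz(2) by (auto simp: cross2_def)
  show "A \<noteq> D" using cross_nz(3) by (auto simp: cross2_def)
  show "A \<noteq> C"
  proof
    assume "A = C" then have "C - B = - (B - A)" by simp
    then show False using cross_nz(1) cross2_neg_self(1)[of "B - A"] by simp
  qed
  show "B \<noteq> D"
  proof
    assume "B = D" then have "D - C = - (C - B)" by simp
    then show False using cross_nz(2) cross2_neg_self(1)[of "C - B"] by simp
  qed
qed

lemma not_collinear: "\<not> collinear {A, B, C}"
proof
  assume "collinear {A, B, C}"
  then have "collinear {0, A - B, C - B}"
    by (subst (asm) collinear_3) simp
  then have "A - B = 0 \<or> C - B = 0 \<or> (\<exists>c. C - B = c *\<^sub>R (A - B))"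
    by (simp add: collinear_lemma)
  then show False
  proof (elim disjE exE)
    assume "A - B = 0" then show False using distinct4 by simp
  next
    assume "C - B = 0" then show False using distinct4 by simp
  next
    fix c assume "C - B = c *\<^sub>R (A - B)"
    then have h: "Re C - Re B = c*(Re A - Re B)" "Im C - Im B = c*(Im A - Im B)"
      by (metis minus_complex.simps scaleR_complex.simps)+
    have "cross2 (B - A) (C - B) = (Re B - Re A)*(Im C - Im B) - (Im B - Im A)*(Re C - Re B)"
      by (simp add: cross2_def)
    also have "\<dots> = 0" unfolding h by (simp add: algebra_simps)
    finally have "cross2 (B - A) (C - B) = 0" .
    then show False using cross_nz by simp
  qed
qed

lemma rel_int: "rel_interior (convex hull {A, B, C, D}) = interior (convex hull {A, B, C, D})"
proof (rule rel_interior_nonempty_interior)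
  have "\<not> affine_dependent {A, B, C}"
    using not_collinear collinear_3_eq_affine_dependent by blast
  moreover have "card {A, B, C} = Suc (DIM(complex))" using distinct4 by simp
  ultimately have "interior (convex hull {A, B, C}) \<noteq> {}"
    using interior_convex_hull_eq_empty by blast
  moreover have "interior (convex hull {A, B, C}) \<subseteq> interior (convex hull {A, B, C, D})"
    by (intro interior_mono hull_mono) auto
  ultimately show "interior (convex hull {A, B, C, D}) \<noteq> {}" by blast
qed

definition "a1 = cs2/(2*Cs*dC)"
definition "a2 = cs1/(2*Cs*dC)"
definition "b1 = ct2/(2*Ct)"
definition "b2 = ct1/(2*Ct)"

lemma scale_V: "s + t \<noteq> 0 \<Longrightarrow> (k*(s+t)/W) *\<^sub>R V s t = Complex (k*t/W) (k/W)"
  by (simp add: V_def complex_eq_iff)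

lemma z_interior: "z \<in> interior (convex hull {A, B, C, D})"
proof -
  have ha: "a1 + a2 = 1" unfolding a1_def a2_def using Cs_pos dC_pos
    by (simp add: defs field_simps)
  have hb: "b1 + b2 = dC" unfolding b1_def b2_def using Ct_pos
    by (simp add: defs field_simps)
  have ebt: "ct2*t1 + ct1*t2 = 2*Ct*U" unfolding defs using hd by algebra
  have hbt: "b1*t1 + b2*t2 = U" unfolding b1_def b2_def using Ct_pos ebt
    by (simp add: field_simps)
  have eas: "cs2 * s1 + cs1 * s2 = 2*Cs*S" unfolding defs using hd by algebra
  have has: "a1 * s1 + a2 * s2 = S/dC" unfolding a1_def a2_def using Cs_pos dC_pos eas
    by (simp add: field_simps)
  have apos: "a1 > 0" "a2 > 0" "b1 > 0" "b2 > 0"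
    using cs1_pos cs2_pos ct1_pos ct2_pos Cs_pos Ct_pos dC_pos by (simp_all add: a1_def a2_def b1_def b2_def)
  define lA where "lA = a1*b1*(s1+t1)/W"
  define lB where "lB = a2*b1*(s2+t1)/W"
  define lC where "lC = a2*b2*(s2+t2)/W"
  define lD where "lD = a1*b2*(s1+t2)/W"
  have lpos: "lA > 0" "lB > 0" "lC > 0" "lD > 0"
    unfolding lA_def lB_def lC_def lD_def using apos P11 P12 P21 P22 W_pos by simp_all
  have "lA + lB + lC + lD = ((a1 * s1 + a2 * s2)*(b1+b2) + (a1+a2)*(b1*t1+b2*t2))/W"
    unfolding lA_def lB_def lC_def lD_def by (simp add: add_divide_distrib[symmetric] algebra_simps)
  also have "\<dots> = 1" unfolding ha hb hbt has using dC_pos W_pos by (simp add: W_def)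
  finally have lsum: "lA + lB + lC + lD = 1" .
  have "lA *\<^sub>R A + lB *\<^sub>R B + lC *\<^sub>R C + lD *\<^sub>R D =
     Complex (a1*b1*t1/W) (a1*b1/W) + Complex (a2*b1*t1/W) (a2*b1/W) +
     Complex (a2*b2*t2/W) (a2*b2/W) + Complex (a1*b2*t2/W) (a1*b2/W)"
    unfolding lA_def lB_def lC_def lD_def A_def B_def C_def D_def
    using scale_V[of s1 t1 "a1*b1"] scale_V[of s2 t1 "a2*b1"] scale_V[of s2 t2 "a2*b2"]
      scale_V[of s1 t2 "a1*b2"] P11 P12 P21 P22 by simp
  also have "\<dots> = Complex ((a1+a2)*(b1*t1+b2*t2)/W) ((a1+a2)*(b1+b2)/W)"
    by (simp add: complex_eq_iff add_divide_distrib[symmetric] algebra_simps)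
  also have "\<dots> = z" unfolding ha hb hbt z_def by simp
  finally have lcomb: "lA *\<^sub>R A + lB *\<^sub>R B + lC *\<^sub>R C + lD *\<^sub>R D = z" .
  define u where "u = (\<lambda>v. if v = A then lA else if v = B then lB else if v = C then lC else lD)"
  have "z \<in> {y. \<exists>u. (\<forall>x \<in> {A,B,C,D}. 0 < u x) \<and> sum u {A,B,C,D} = 1 \<and> sum (\<lambda>x. u x *\<^sub>R x) {A,B,C,D} = y}"
  proof (intro CollectI exI[of _ u] conjI)
    show "\<forall>x \<in> {A,B,C,D}. 0 < u x" using lpos distinct4 by (auto simp: u_def)
    show "sum u {A,B,C,D} = 1" using lsum distinct4 by (simp add: u_def algebra_simps)
    show "sum (\<lambda>x. u x *\<^sub>R x) {A,B,C,D} = z" using lcomb distinct4 by (simp add: u_def algebra_simps)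
  qed
  then have "z \<in> rel_interior (convex hull {A,B,C,D})"
    using explicit_subset_rel_interior_convex_hull_minimal[of "{A,B,C,D}"] by blast
  then show ?thesis using rel_int by simp
qed

lemma tangential: "tangential_quadrilateral A B C D"
  unfolding tangential_quadrilateral_def
  using convex r_pos z_interior side_AB side_BC side_CD side_DA by blast
end

definition sh :: "real \<Rightarrow> real" where "sh E = (E - 1/E)/2"
definition ch :: "real \<Rightarrow> real" where "ch E = (E + 1/E)/2"

lemma ch_sq: "E \<noteq> 0 \<Longrightarrow> (ch E)^2 = 1 + (sh E)^2"
  unfolding sh_def ch_def by (simp add: field_simps power2_eq_square)

lemma ch_pos: "E > 0 \<Longrightarrow> ch E > 0"
  unfolding ch_def by (simp add: add_pos_pos)

lemma sh_pos: "E > 1 \<Longrightarrow> sh E > 0"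
proof -
  assume "E > 1"
  then have "1/E < E" using less_trans[of "1/E" 1 E] by (simp add: divide_less_eq)
  then show ?thesis unfolding sh_def by simp
qed

lemma sh_sum: "p > 0 \<Longrightarrow> q > 0 \<Longrightarrow> sh p + sh q = (p+q)*(p*q-1)/(2*p*q)"
  unfolding sh_def by (simp add: field_simps)

lemma sh_sum_pos: "p > 0 \<Longrightarrow> q > 0 \<Longrightarrow> p*q > 1 \<Longrightarrow> sh p + sh q > 0"
  by (simp add: sh_sum)

lemma sh_mul: "E > 0 \<Longrightarrow> F > 0 \<Longrightarrow> sh E * ch F + ch E * sh F = sh (E*F)"
  unfolding sh_def ch_def by (simp add: field_simps)

lemma sh_div: "E > 0 \<Longrightarrow> F > 0 \<Longrightarrow> sh E * ch F - ch E * sh F = sh (E/F)"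
  unfolding sh_def ch_def by (simp add: field_simps)

lemma T_V:
  assumes "a > 1" "x + y > 0"
  shows "T a x y = V (sh (a powr x)) (sh (a powr y))"
proof -
  define p where "p = a powr x"
  define q where "q = a powr y"
  have p: "p > 0" and q: "q > 0" using assms by (simp_all add: p_def q_def)
  have pq: "a powr (x+y) = p*q" by (simp add: p_def q_def powr_add)
  have q2: "a powr (2*y) = q*q" by (simp add: q_def powr_add[symmetric])
  have "p*q > 1" unfolding pq[symmetric] using assms by simp
  then have nz: "p*q - 1 \<noteq> 0" "p + q \<noteq> 0" using p q by auto
  have s: "sh p + sh q = (p+q)*(p*q-1)/(2*p*q)" using sh_sum[OF p q] .
  have h1: "sh q * (2*p*q) = p*(q*q-1)" using p q by (simp add: sh_def field_simps)
  have re: "sh q / (sh p + sh q) = p*(q*q-1)/((p+q)*(p*q-1))"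
    unfolding s by (simp add: h1[symmetric])
  have im: "1 / (sh p + sh q) = 2*(p*q)/((p+q)*(p*q-1))"
    unfolding s by (simp add: mult.assoc)
  show ?thesis unfolding T_def V_def Tf_def Tg_def p_def[symmetric] q_def[symmetric] pq q2 re im
    by simp
qed

lemma powr_gt1: "(a::real) > 1 \<Longrightarrow> u > 0 \<Longrightarrow> a powr u > 1"
  using powr_less_cancel_iff[of a 0 u] by simp

lemma pq_gt1: "(a::real) > 1 \<Longrightarrow> x + y > 0 \<Longrightarrow> a powr x * a powr y > 1"
  using powr_gt1[of a "x+y"] by (metis powr_add)

theorem theorem6p1:
  fixes a :: real
  assumes "a > 1"
  shows "(\<forall>c. \<exists>d. d \<noteq> 0 \<and> (\<forall>y. c + y > 0 \<longrightarrow> T a c y \<in> line_through 1 d))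
    \<and> (\<forall>c. \<exists>d. d \<noteq> 0 \<and> (\<forall>x. x + c > 0 \<longrightarrow> T a x c \<in> line_through 0 d))
    \<and> (\<forall>x y l. l > 0 \<and> x + y > 0 \<longrightarrow>
         (let A' = T a x y; B' = T a (x + l) y; C' = T a (x + l) (y + l); D' = T a x (y + l)
          in tangential_quadrilateral A' B' C' D' \<and>
             dist A' B' + dist C' D' = dist B' C' + dist D' A'))"
proof -
  have a0: "a > 0" using assms by simp
  have nzs: "sh (a powr x) + sh (a powr y) \<noteq> 0" if "x + y > 0" for x y
    using sh_sum_pos[of "a powr x" "a powr y"] pq_gt1[OF assms that] a0 by simp
  have partA: "\<forall>c. \<exists>d. d \<noteq> 0 \<and> (\<forall>y. c + y > 0 \<longrightarrow> T a c y \<in> line_through 1 d)"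
  proof
    fix c
    show "\<exists>d. d \<noteq> 0 \<and> (\<forall>y. c + y > 0 \<longrightarrow> T a c y \<in> line_through 1 d)"
    proof (intro exI conjI allI impI)
      show "Complex (- sh (a powr c)) 1 \<noteq> 0" by (simp add: complex_eq_iff)
      fix y assume cy: "c + y > 0"
      have "T a c y = 1 + of_real (1/(sh (a powr c) + sh (a powr y))) * Complex (- sh (a powr c)) 1"
        using T_V[OF assms cy] V_scale'[OF nzs[OF cy]] by (simp add: scaleR_conv_of_real)
      then show "T a c y \<in> line_through 1 (Complex (- sh (a powr c)) 1)"
        unfolding line_through_def by blast
    qed
  qed
  have partB: "\<forall>c. \<exists>d. d \<noteq> 0 \<and> (\<forall>x. x + c > 0 \<longrightarrow> T a x c \<in> line_through 0 d)"
  proof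
    fix c
    show "\<exists>d. d \<noteq> 0 \<and> (\<forall>x. x + c > 0 \<longrightarrow> T a x c \<in> line_through 0 d)"
    proof (intro exI conjI allI impI)
      show "Complex (sh (a powr c)) 1 \<noteq> 0" by (simp add: complex_eq_iff)
      fix x assume cx: "x + c > 0"
      have "T a x c = 0 + of_real (1/(sh (a powr x) + sh (a powr c))) * Complex (sh (a powr c)) 1"
        using T_V[OF assms cx] V_scale[of "sh (a powr x)" "sh (a powr c)"] by (simp add: scaleR_conv_of_real)
      then show "T a x c \<in> line_through 0 (Complex (sh (a powr c)) 1)"
        unfolding line_through_def by blast
    qed
  qed
  have partC: "\<forall>x y l. l > 0 \<and> x + y > 0 \<longrightarrow>
         (let A' = T a x y; B' = T a (x + l) y; C' = T a (x + l) (y + l); D' = T a x (y + l)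
          in tangential_quadrilateral A' B' C' D' \<and>
             dist A' B' + dist C' D' = dist B' C' + dist D' A')"
  proof (intro allI impI)
    fix x y l :: real assume xyl: "l > 0 \<and> x + y > 0"
    define p where "p = a powr x"
    define q where "q = a powr y"
    define e where "e = a powr (l/2)"
    have p: "p > 0" and q: "q > 0" and e0: "e > 0" using a0 by (simp_all add: p_def q_def e_def)
    have e1: "e > 1" unfolding e_def using powr_gt1[OF assms, of "l/2"] xyl by simp
    have ee: "a powr l = e*e" unfolding e_def by (simp add: powr_add[symmetric])
    have pl: "a powr (x+l) = p*e*e" by (simp add: p_def ee powr_add mult.assoc)
    have ql: "a powr (y+l) = q*e*e" by (simp add: q_def ee powr_add mult.assoc)
    have pq1: "p*q > 1" unfolding p_def q_def using pq_gt1[OF assms] xyl by simp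
    have hs1: "sh (p*e) * ch e - ch (p*e) * sh e = sh p" using sh_div[of "p*e" e] p e0 by simp
    have hs2: "sh (p*e) * ch e + ch (p*e) * sh e = sh (p*e*e)" using sh_mul[of "p*e" e] p e0 by simp
    have ht1: "sh (q*e) * ch e - ch (q*e) * sh e = sh q" using sh_div[of "q*e" e] q e0 by simp
    have ht2: "sh (q*e) * ch e + ch (q*e) * sh e = sh (q*e*e)" using sh_mul[of "q*e" e] q e0 by simp
    interpret sq: sqr "sh(p*e)" "ch(p*e)" "sh(q*e)" "ch(q*e)" "sh e" "ch e"
    proof
      show "(ch (p*e))^2 = 1 + (sh (p*e))^2" using p e0 by (simp add: ch_sq)
      show "(ch (q*e))^2 = 1 + (sh (q*e))^2" using q e0 by (simp add: ch_sq)
      show "(ch e)^2 = 1 + (sh e)^2" using e0 by (simp add: ch_sq)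
      show "ch (p*e) > 0" "ch (q*e) > 0" "ch e > 0" using p q e0 by (simp_all add: ch_pos)
      show "sh e > 0" using e1 by (rule sh_pos)
      show "(sh (p*e) * ch e - ch (p*e) * sh e) + (sh (q*e) * ch e - ch (q*e) * sh e) > 0"
        unfolding hs1 ht1 using sh_sum_pos[OF p q pq1] .
    qed
    have s1: "sq.s1 = sh p" unfolding sq.s1_def using hs1 by simp
    have s2: "sq.s2 = sh (p*e*e)" unfolding sq.s2_def using hs2 by simp
    have t1: "sq.t1 = sh q" unfolding sq.t1_def using ht1 by simp
    have t2: "sq.t2 = sh (q*e*e)" unfolding sq.t2_def using ht2 by simp
    have TA0: "T a x y = V (sh p) (sh q)" unfolding p_def q_def using T_V[OF assms] xyl by simp
    have TB0: "T a (x+l) y = V (sh (p*e*e)) (sh q)" unfolding pl[symmetric] q_def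
      using T_V[OF assms, of "x+l" y] xyl by simp
    have TC0: "T a (x+l) (y+l) = V (sh (p*e*e)) (sh (q*e*e))" unfolding pl[symmetric] ql[symmetric]
      using T_V[OF assms, of "x+l" "y+l"] xyl by simp
    have TD0: "T a x (y+l) = V (sh p) (sh (q*e*e))" unfolding p_def ql[symmetric]
      using T_V[OF assms, of x "y+l"] xyl by simp
    have TA: "T a x y = sq.A" unfolding TA0 sq.A_def s1 t1 ..
    have TB: "T a (x+l) y = sq.B" unfolding TB0 sq.B_def s2 t1 ..
    have TC: "T a (x+l) (y+l) = sq.C" unfolding TC0 sq.C_def s2 t2 ..
    have TD: "T a x (y+l) = sq.D" unfolding TD0 sq.D_def s1 t2 ..
    show "let A' = T a x y; B' = T a (x + l) y; C' = T a (x + l) (y + l); D' = T a x (y + l)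
          in tangential_quadrilateral A' B' C' D' \<and>
             dist A' B' + dist C' D' = dist B' C' + dist D' A'"
      unfolding Let_def TA TB TC TD using sq.tangential sq.pitot by blast
  qed
  show ?thesis using partA partB partC by blast
qed

end
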